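(* Let $k$ be a commutative ring, $A$ a commutative $k$-algebra and $m\ge1$ an integer or $m=\infty$. There is a well-defined $A$-linear map $\chi_m:\operatorname{Ider}_k(A;m)\to\operatorname{EXP}_m(\operatorname{gr}\operatorname{Diff}_{A/k})$ such that $\chi_m(\delta)=\Sigma_m(D)$ for every $\delta\in\operatorname{Ider}_k(A;m)$ and every $D\in\operatorname{HS}_k(A;m)$ with $D_1=\delta$.
   Context: $\operatorname{HS}_k(A;m)$: sequences $D=(D_0,\dots,D_m)$ of $k$-linear maps $A\to A$ with $D_0=\mathrm{Id}$, $D_i(xy)=\sum_{r+s=i}D_r(x)D_s(y)$; it is a group under $(D\circ D')_n=\sum_{i+j=n}D_i\circ D'_j$. $\operatorname{Ider}_k(A;m)$ is the set of $\delta\in\operatorname{Der}_k(A)$ with $\delta=D_1$ for some $D\in\operatorname{HS}_k(A;m)$. $\operatorname{gr}\operatorname{Diff}_{A/k}$ is the graded ring associated to the order filtration of the ring of $k$-linear differential operators of $A$, $\sigma_i$ the symbol maps, $\Sigma_m(D)=\sum_{i=0}^m\sigma_i(D_i)t^i$. For an $A$-algebra $B$, $\operatorname{EXP}_m(B)$ is the set of $\sum_{i=0}^mR_it^i\in B[[t]]/(t^{m+1})$ with $R_0=1$ and $\binom{i+j}{i}R_{i+j}=R_iR_j$ for $i+j\le m$; it is an $A$-module with addition = multiplication of series and $a\cdot\sum R_it^i=\sum a^iR_it^i$. *)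

theory Defs
  imports Main "HOL-Library.Extended_Nat"
begin

text \<open>The base ring k is a type 'k, the commutative k-algebra A is a type 'a,
  with structure map phi : k -> A a unital ring homomorphism.\<close>

definition ring_hom_map :: "('k::comm_ring_1 \<Rightarrow> 'a::comm_ring_1) \<Rightarrow> bool" where
  "ring_hom_map phi \<longleftrightarrow> phi 1 = 1 \<and> (\<forall>x y. phi (x + y) = phi x + phi y)
     \<and> (\<forall>x y. phi (x * y) = phi x * phi y)"

definition klin :: "('k::comm_ring_1 \<Rightarrow> 'a::comm_ring_1) \<Rightarrow> ('a \<Rightarrow> 'a) \<Rightarrow> bool" where
  "klin phi P \<longleftrightarrow> (\<forall>x y. P (x + y) = P x + P y) \<and> (\<forall>c x. P (phi c * x) = phi c * P x)"

text \<open>Hasse--Schmidt derivations of length m (m = \<infinity> allowed); components beyond m are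
  normalised to 0.\<close>
definition HS :: "('k::comm_ring_1 \<Rightarrow> 'a::comm_ring_1) \<Rightarrow> enat \<Rightarrow> (nat \<Rightarrow> 'a \<Rightarrow> 'a) \<Rightarrow> bool" where
  "HS phi m D \<longleftrightarrow> D 0 = id
     \<and> (\<forall>i. enat i \<le> m \<longrightarrow> klin phi (D i))
     \<and> (\<forall>i. enat i \<le> m \<longrightarrow> (\<forall>x y. D i (x * y) = (\<Sum>r\<le>i. D r x * D (i - r) y)))
     \<and> (\<forall>i. m < enat i \<longrightarrow> D i = (\<lambda>_. 0))"

definition Ider :: "('k::comm_ring_1 \<Rightarrow> 'a::comm_ring_1) \<Rightarrow> enat \<Rightarrow> ('a \<Rightarrow> 'a) set" where
  "Ider phi m = {\<delta>. \<exists>D. HS phi m D \<and> D 1 = \<delta>}"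

text \<open>Grothendieck differential operators: diffop phi n P means P is in Diff^n
  (order at most n).\<close>
fun diffop :: "('k::comm_ring_1 \<Rightarrow> 'a::comm_ring_1) \<Rightarrow> nat \<Rightarrow> ('a \<Rightarrow> 'a) \<Rightarrow> bool" where
  "diffop phi 0 P \<longleftrightarrow> klin phi P \<and> (\<forall>a x. P (a * x) = a * P x)"
| "diffop phi (Suc n) P \<longleftrightarrow> klin phi P \<and> (\<forall>a. diffop phi n (\<lambda>x. P (a * x) - a * P x))"

text \<open>lowerdiff phi i R: R lies in Diff^(i-1), with Diff^(-1) = 0.\<close>
fun lowerdiff :: "('k::comm_ring_1 \<Rightarrow> 'a::comm_ring_1) \<Rightarrow> nat \<Rightarrow> ('a \<Rightarrow> 'a) \<Rightarrow> bool" where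
  "lowerdiff phi 0 R \<longleftrightarrow> R = (\<lambda>_. 0)"
| "lowerdiff phi (Suc n) R \<longleftrightarrow> diffop phi n R"

text \<open>Symbol map sigma_i : Diff^i -> Diff^i / Diff^(i-1) (class as a set of operators).\<close>
definition sym :: "('k::comm_ring_1 \<Rightarrow> 'a::comm_ring_1) \<Rightarrow> nat \<Rightarrow> ('a \<Rightarrow> 'a) \<Rightarrow> ('a \<Rightarrow> 'a) set" where
  "sym phi i P = {Q. diffop phi i Q \<and> lowerdiff phi i (\<lambda>x. Q x - P x)}"

definition rep :: "('a \<Rightarrow> 'a) set \<Rightarrow> ('a \<Rightarrow> 'a)" where
  "rep X = (SOME P. P \<in> X)"

text \<open>Elements of gr Diff = direct sum of Diff^i/Diff^(i-1): families of classes,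
  almost all zero.\<close>
type_synonym 'a grd = "nat \<Rightarrow> ('a \<Rightarrow> 'a) set"

definition gr_zero :: "('k::comm_ring_1 \<Rightarrow> 'a::comm_ring_1) \<Rightarrow> 'a grd" where
  "gr_zero phi = (\<lambda>i. sym phi i (\<lambda>_. 0))"

definition grD :: "('k::comm_ring_1 \<Rightarrow> 'a::comm_ring_1) \<Rightarrow> 'a grd set" where
  "grD phi = {g. (\<forall>i. \<exists>P. diffop phi i P \<and> g i = sym phi i P)
                 \<and> finite {i. g i \<noteq> gr_zero phi i}}"

definition gr_one :: "('k::comm_ring_1 \<Rightarrow> 'a::comm_ring_1) \<Rightarrow> 'a grd" where
  "gr_one phi = (\<lambda>i. sym phi i (if i = 0 then id else (\<lambda>_. 0)))"

definition gr_mult :: "('k::comm_ring_1 \<Rightarrow> 'a::comm_ring_1) \<Rightarrow> 'a grd \<Rightarrow> 'a grd \<Rightarrow> 'a grd" where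
  "gr_mult phi g h = (\<lambda>l. sym phi l (\<lambda>x. \<Sum>i\<le>l. rep (g i) (rep (h (l - i)) x)))"

definition gr_nsmul :: "('k::comm_ring_1 \<Rightarrow> 'a::comm_ring_1) \<Rightarrow> nat \<Rightarrow> 'a grd \<Rightarrow> 'a grd" where
  "gr_nsmul phi c g = (\<lambda>l. sym phi l (\<lambda>x. of_nat c * rep (g l) x))"

definition gr_scal :: "('k::comm_ring_1 \<Rightarrow> 'a::comm_ring_1) \<Rightarrow> 'a \<Rightarrow> 'a grd \<Rightarrow> 'a grd" where
  "gr_scal phi a g = (\<lambda>l. sym phi l (\<lambda>x. a * rep (g l) x))"

definition gr_hom :: "('k::comm_ring_1 \<Rightarrow> 'a::comm_ring_1) \<Rightarrow> nat \<Rightarrow> ('a \<Rightarrow> 'a) \<Rightarrow> 'a grd" where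
  "gr_hom phi i P = (\<lambda>l. if l = i then sym phi i P else sym phi l (\<lambda>_. 0))"

text \<open>Truncated series in B[[t]]/(t^(m+1)), B = gr Diff, as coefficient sequences with
  coefficients beyond m normalised to 0.\<close>
definition EXP :: "('k::comm_ring_1 \<Rightarrow> 'a::comm_ring_1) \<Rightarrow> enat \<Rightarrow> (nat \<Rightarrow> 'a grd) set" where
  "EXP phi m = {R. (\<forall>i. R i \<in> grD phi) \<and> (\<forall>i. m < enat i \<longrightarrow> R i = gr_zero phi)
      \<and> R 0 = gr_one phi
      \<and> (\<forall>i j. enat (i + j) \<le> m \<longrightarrow>
            gr_nsmul phi ((i + j) choose i) (R (i + j)) = gr_mult phi (R i) (R j))}"

text \<open>Addition in EXP_m: product of truncated series.\<close>
definition EXP_add :: "('k::comm_ring_1 \<Rightarrow> 'a::comm_ring_1) \<Rightarrow> enat \<Rightarrow> (nat \<Rightarrow> 'a grd) \<Rightarrow> (nat \<Rightarrow> 'a grd) \<Rightarrow> (nat \<Rightarrow> 'a grd)" where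
  "EXP_add phi m R S = (\<lambda>n. if enat n \<le> m then
       (\<lambda>l. sym phi l (\<lambda>x. \<Sum>i\<le>n. rep (gr_mult phi (R i) (S (n - i)) l) x))
     else gr_zero phi)"

definition EXP_scal :: "('k::comm_ring_1 \<Rightarrow> 'a::comm_ring_1) \<Rightarrow> 'a \<Rightarrow> (nat \<Rightarrow> 'a grd) \<Rightarrow> (nat \<Rightarrow> 'a grd)" where
  "EXP_scal phi a R = (\<lambda>n. gr_scal phi (a ^ n) (R n))"

definition SigmaD :: "('k::comm_ring_1 \<Rightarrow> 'a::comm_ring_1) \<Rightarrow> enat \<Rightarrow> (nat \<Rightarrow> 'a \<Rightarrow> 'a) \<Rightarrow> (nat \<Rightarrow> 'a grd)" where
  "SigmaD phi m D = (\<lambda>i. if enat i \<le> m then gr_hom phi i (D i) else gr_zero phi)"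

end

theory Submission
  imports Defs
begin

lemma klin_P0: "klin phi P \<Longrightarrow> P 0 = 0"
  unfolding klin_def by (metis add_cancel_right_right add_0)
lemma klin_minus: "klin phi P \<Longrightarrow> P (x - y) = P x - P y"
  unfolding klin_def by (metis add_diff_cancel diff_add_cancel eq_diff_eq)
lemma klin_sumP: "klin phi P \<Longrightarrow> P (\<Sum>i\<in>S. g i) = (\<Sum>i\<in>S. P (g i))"
proof (induction S rule: infinite_finite_induct)
  case (infinite A) then show ?case by (simp add: klin_P0)
next
  case empty then show ?case by (simp add: klin_P0)
next
  case (insert x F) then show ?case by (simp add: klin_def)
qed
lemma klin_zero: "klin phi (\<lambda>_. 0)" by (simp add: klin_def)
lemma klin_id: "klin phi (\<lambda>x. x)" by (simp add: klin_def)
lemma klin_add: "klin phi P \<Longrightarrow> klin phi Q \<Longrightarrow> klin phi (\<lambda>x. P x + Q x)"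
  by (simp add: klin_def algebra_simps)
lemma klin_diff: "klin phi P \<Longrightarrow> klin phi Q \<Longrightarrow> klin phi (\<lambda>x. P x - Q x)"
  by (simp add: klin_def algebra_simps)
lemma klin_scal: "klin phi P \<Longrightarrow> klin phi (\<lambda>x. b * P x)"
  by (simp add: klin_def algebra_simps)
lemma klin_comp: "klin phi P \<Longrightarrow> klin phi Q \<Longrightarrow> klin phi (\<lambda>x. P (Q x))"
  by (simp add: klin_def)
lemma klin_sum: "(\<And>i. i \<in> S \<Longrightarrow> klin phi (f i)) \<Longrightarrow> klin phi (\<lambda>x. \<Sum>i\<in>S. f i x)"
  by (simp add: klin_def sum.distrib sum_distrib_left)

lemma diffop_klin: "diffop phi n P \<Longrightarrow> klin phi P"
  by (cases n) auto

lemma diffop_cong: "diffop phi n P \<Longrightarrow> P = Q \<Longrightarrow> diffop phi n Q" by simp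

lemma diffop_zero: "diffop phi n (\<lambda>_. 0)"
  by (induction n) (auto simp: klin_zero)

lemma diffop_add: "diffop phi n P \<Longrightarrow> diffop phi n Q \<Longrightarrow> diffop phi n (\<lambda>x. P x + Q x)"
proof (induction n arbitrary: P Q)
  case 0 then show ?case by (auto simp: klin_add algebra_simps)
next
  case (Suc n)
  show ?case
  proof (simp, intro conjI allI)
    show "klin phi (\<lambda>x. P x + Q x)" using Suc by (auto simp: klin_add)
    fix a
    have "diffop phi n (\<lambda>x. (P (a*x) - a * P x) + (Q (a*x) - a * Q x))"
      using Suc by auto
    then show "diffop phi n (\<lambda>x. P (a * x) + Q (a * x) - a * (P x + Q x))"
      by (rule diffop_cong) (auto simp: algebra_simps)
  qed
qed

lemma diffop_scal: "diffop phi n P \<Longrightarrow> diffop phi n (\<lambda>x. b * P x)"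
proof (induction n arbitrary: P)
  case 0 then show ?case by (auto simp: klin_scal algebra_simps)
next
  case (Suc n)
  show ?case
  proof (simp, intro conjI allI)
    show "klin phi (\<lambda>x. b * P x)" using Suc by (auto simp: klin_scal)
    fix a
    have "diffop phi n (\<lambda>x. b * (P (a*x) - a * P x))"
      using Suc by auto
    then show "diffop phi n (\<lambda>x. b * P (a * x) - a * (b * P x))"
      by (rule diffop_cong) (auto simp: algebra_simps)
  qed
qed

lemma diffop_diff: "diffop phi n P \<Longrightarrow> diffop phi n Q \<Longrightarrow> diffop phi n (\<lambda>x. P x - Q x)"
  using diffop_add[of phi n P "\<lambda>x. (-1) * Q x"] diffop_scal[of phi n Q "-1"] by simp

lemma diffop_sum: "(\<And>i. i \<in> S \<Longrightarrow> diffop phi n (f i)) \<Longrightarrow> diffop phi n (\<lambda>x. \<Sum>i\<in>S. f i x)"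
proof (induction S rule: infinite_finite_induct)
  case (infinite A) then show ?case by (simp add: diffop_zero)
next
  case empty then show ?case by (simp add: diffop_zero)
next
  case (insert x F) then show ?case by (simp add: diffop_add)
qed

lemma diffop_Suc: "diffop phi n P \<Longrightarrow> diffop phi (Suc n) P"
proof (induction n arbitrary: P)
  case 0 then show ?case by (simp add: diffop_zero)
next
  case (Suc n)
  have k: "klin phi P" and c: "\<And>a. diffop phi n (\<lambda>x. P (a * x) - a * P x)"
    using Suc.prems by auto
  show ?case
    apply (subst diffop.simps(2))
    using k c Suc.IH by blast
qed

lemma diffop_mono: "n \<le> n' \<Longrightarrow> diffop phi n P \<Longrightarrow> diffop phi n' P"
  by (induction n' rule: dec_induct) (auto intro: diffop_Suc simp del: diffop.simps)

lemma diffop_id: "diffop phi 0 (\<lambda>x. x)" by (simp add: klin_id)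

lemma diffop_comp_aux: "\<forall>p q P Q. p + q = N \<longrightarrow> diffop phi p P \<longrightarrow> diffop phi q Q \<longrightarrow> diffop phi N (\<lambda>x. P (Q x))"
proof (induction N)
  case 0 then show ?case by (auto simp: klin_comp)
next
  case (Suc N)
  show ?case
  proof (intro allI impI)
    fix p q P Q assume pq: "p + q = Suc N" and dP: "diffop phi p P" and dQ: "diffop phi q Q"
    have kP: "klin phi P" and kQ: "klin phi Q" using dP dQ diffop_klin by auto
    show "diffop phi (Suc N) (\<lambda>x. P (Q x))"
    proof (simp, intro conjI allI)
      show "klin phi (\<lambda>x. P (Q x))" using kP kQ by (rule klin_comp)
      fix a
      have t1: "diffop phi N (\<lambda>x. P (a * Q x) - a * P (Q x))"
      proof (cases p)
        case 0 then show ?thesis using dP by (simp add: diffop_zero)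
      next
        case (Suc p') then show ?thesis using Suc.IH dP dQ pq by auto
      qed
      have t2: "diffop phi N (\<lambda>x. P (Q (a * x) - a * Q x))"
      proof (cases q)
        case 0 then show ?thesis using dQ kP by (simp add: diffop_zero klin_P0)
      next
        case (Suc q')
        then have "diffop phi q' (\<lambda>x. Q (a * x) - a * Q x)" "p + q' = N" using dQ pq by auto
        then show ?thesis using Suc.IH dP by blast
      qed
      show "diffop phi N (\<lambda>x. P (Q (a * x)) - a * P (Q x))"
        using diffop_add[OF t1 t2] by (rule diffop_cong) (auto simp: klin_minus[OF kP])
    qed
  qed
qed

lemma diffop_comp: "diffop phi p P \<Longrightarrow> diffop phi q Q \<Longrightarrow> diffop phi (p + q) (\<lambda>x. P (Q x))"
  using diffop_comp_aux by blast

lemma low_diffop: "lowerdiff phi n P \<Longrightarrow> diffop phi n P"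
  by (cases n) (auto simp: diffop_zero intro: diffop_Suc simp del: diffop.simps(2))
lemma low_zero: "lowerdiff phi n (\<lambda>_. 0)"
  by (cases n) (auto simp: diffop_zero)
lemma low_cong: "lowerdiff phi n P \<Longrightarrow> P = Q \<Longrightarrow> lowerdiff phi n Q" by simp
lemma low_add: "lowerdiff phi n P \<Longrightarrow> lowerdiff phi n Q \<Longrightarrow> lowerdiff phi n (\<lambda>x. P x + Q x)"
  by (cases n) (auto simp: diffop_add)
lemma low_diff: "lowerdiff phi n P \<Longrightarrow> lowerdiff phi n Q \<Longrightarrow> lowerdiff phi n (\<lambda>x. P x - Q x)"
  by (cases n) (auto simp: diffop_diff)
lemma low_scal: "lowerdiff phi n P \<Longrightarrow> lowerdiff phi n (\<lambda>x. b * P x)"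
  by (cases n) (auto simp: diffop_scal)
lemma low_sum: "(\<And>i. i \<in> S \<Longrightarrow> lowerdiff phi n (f i)) \<Longrightarrow> lowerdiff phi n (\<lambda>x. \<Sum>i\<in>S. f i x)"
proof (cases n)
  case 0
  assume "\<And>i. i \<in> S \<Longrightarrow> lowerdiff phi n (f i)"
  then have "\<And>i. i \<in> S \<Longrightarrow> f i = (\<lambda>_. 0)" using 0 by auto
  then show ?thesis using 0 by simp
next
  case (Suc k)
  assume "\<And>i. i \<in> S \<Longrightarrow> lowerdiff phi n (f i)"
  then show ?thesis using Suc by (auto intro: diffop_sum)
qed
lemma low_mono: "n \<le> n' \<Longrightarrow> lowerdiff phi n P \<Longrightarrow> lowerdiff phi n' P"
proof (cases n)
  case 0 assume "lowerdiff phi n P" then show ?thesis using 0 by (simp add: low_zero)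
next
  case (Suc k) assume "n \<le> n'" "lowerdiff phi n P"
  then obtain k' where "n' = Suc k'" "k \<le> k'" using Suc by (cases n') auto
  then show ?thesis using diffop_mono[of k k' phi P] \<open>lowerdiff phi n P\<close> Suc by simp
qed

lemma diffop_comm_low: "diffop phi p P \<Longrightarrow> lowerdiff phi p (\<lambda>x. P (a * x) - a * P x)"
  by (cases p) auto

lemma low_comp1: "lowerdiff phi p P \<Longrightarrow> diffop phi q Q \<Longrightarrow> lowerdiff phi (p + q) (\<lambda>x. P (Q x))"
  by (cases p) (auto simp: low_zero diffop_comp)

lemma low_comp2: "diffop phi p P \<Longrightarrow> lowerdiff phi q Q \<Longrightarrow> lowerdiff phi (p + q) (\<lambda>x. P (Q x))"
proof (cases q)
  case 0
  assume "diffop phi p P" "lowerdiff phi q Q"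
  then have "P 0 = 0" by (metis klin_P0 diffop_klin)
  then show ?thesis using 0 \<open>lowerdiff phi q Q\<close> by (simp add: low_zero)
next
  case (Suc q')
  assume "diffop phi p P" "lowerdiff phi q Q"
  then show ?thesis using Suc diffop_comp[of phi p P q' Q] by simp
qed


lemma sym_eq: "lowerdiff phi n (\<lambda>x. X x - Y x) \<Longrightarrow> sym phi n X = sym phi n Y"
proof -
  assume h: "lowerdiff phi n (\<lambda>x. X x - Y x)"
  have "lowerdiff phi n (\<lambda>x. Q x - X x) \<longleftrightarrow> lowerdiff phi n (\<lambda>x. Q x - Y x)" for Q
  proof
    assume "lowerdiff phi n (\<lambda>x. Q x - X x)"
    from low_add[OF this h] show "lowerdiff phi n (\<lambda>x. Q x - Y x)" by (rule low_cong) auto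
  next
    assume "lowerdiff phi n (\<lambda>x. Q x - Y x)"
    from low_diff[OF this h] show "lowerdiff phi n (\<lambda>x. Q x - X x)" by (rule low_cong) auto
  qed
  then show ?thesis unfolding sym_def by auto
qed

lemma sym_self: "diffop phi n X \<Longrightarrow> X \<in> sym phi n X"
  unfolding sym_def using low_zero[of phi n] by simp

lemma rep_sym: "diffop phi n X \<Longrightarrow> diffop phi n (rep (sym phi n X)) \<and> lowerdiff phi n (\<lambda>x. rep (sym phi n X) x - X x)"
proof -
  assume "diffop phi n X"
  then have "rep (sym phi n X) \<in> sym phi n X" unfolding rep_def by (metis someI sym_self)
  then show ?thesis unfolding sym_def by simp
qed

lemma gr_hom_alt: "gr_hom phi i P l = sym phi l (if l = i then P else (\<lambda>_. 0))"
  unfolding gr_hom_def by simp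

lemma diffop_H: "diffop phi i P \<Longrightarrow> diffop phi l (if l = i then P else (\<lambda>_. 0))"
  by (auto simp: diffop_zero)

lemma rep_gr_hom: "diffop phi i P \<Longrightarrow> diffop phi l (rep (gr_hom phi i P l)) \<and>
   lowerdiff phi l (\<lambda>x. rep (gr_hom phi i P l) x - (if l = i then P x else 0))"
proof -
  assume "diffop phi i P"
  from rep_sym[OF diffop_H[OF this, of l]] show ?thesis
    unfolding gr_hom_alt by (auto elim: low_cong)
qed

lemma gr_hom_eq: "lowerdiff phi i (\<lambda>x. P x - Q x) \<Longrightarrow> gr_hom phi i P = gr_hom phi i Q"
  unfolding gr_hom_def using sym_eq by fastforce

lemma gr_mult_hom:
  assumes P: "diffop phi i P" and Q: "diffop phi j Q"
  shows "gr_mult phi (gr_hom phi i P) (gr_hom phi j Q) = gr_hom phi (i + j) (\<lambda>x. P (Q x))"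
proof
  fix l
  define U where "U = (\<lambda>i'. rep (gr_hom phi i P i'))"
  define V where "V = (\<lambda>i'. rep (gr_hom phi j Q i'))"
  have U: "diffop phi i' (U i') \<and> lowerdiff phi i' (\<lambda>x. U i' x - (if i' = i then P x else 0))" for i'
    unfolding U_def using rep_gr_hom[OF P] by blast
  have V: "diffop phi i' (V i') \<and> lowerdiff phi i' (\<lambda>x. V i' x - (if i' = j then Q x else 0))" for i'
    unfolding V_def using rep_gr_hom[OF Q] by blast
  have kP: "klin phi P" using P diffop_klin by blast
  have trm: "lowerdiff phi l (\<lambda>x. U i' (V (l - i') x) - (if i' = i \<and> l = i + j then P (Q x) else 0))"
    if "i' \<le> l" for i'
  proof (cases "i' = i \<and> l = i + j")
    case True
    then have lj: "l - i' = j" by simp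
    have a: "lowerdiff phi l (\<lambda>x. U i (V j x) - P (V j x))"
      using low_comp1[of phi i "\<lambda>x. U i x - P x" j "V j"] U[of i] V[of j] True by simp
    have b: "lowerdiff phi l (\<lambda>x. P (V j x - Q x))"
      using low_comp2[OF P, of j "\<lambda>x. V j x - Q x"] V[of j] True by simp
    have "(\<lambda>x. U i (V j x) - P (V j x) + P (V j x - Q x)) =
          (\<lambda>x. U i' (V (l - i') x) - (if i' = i \<and> l = i + j then P (Q x) else 0))"
      using True lj by (auto simp: klin_minus[OF kP] fun_eq_iff)
    then show ?thesis using low_add[OF a b] by simp
  next
    case False
    then have e: "(\<lambda>x. U i' (V (l - i') x) - (if i' = i \<and> l = i + j then P (Q x) else 0)) = (\<lambda>x. U i' (V (l - i') x))"
      by (intro ext) (simp only: if_not_P if_False diff_zero)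
    show ?thesis
    unfolding e
    proof (cases "i' = i")
      case True
      then have "l - i' \<noteq> j" using False that by auto
      then have "lowerdiff phi (l - i') (V (l - i'))" using V[of "l - i'"] by simp
      from low_comp2[OF _ this, of i' "U i'"] U[of i'] that
      show "lowerdiff phi l (\<lambda>x. U i' (V (l - i') x))" by simp
    next
      case F2: False
      then have "lowerdiff phi i' (U i')" using U[of i'] by simp
      from low_comp1[OF this, of "l - i'" "V (l - i')"] V[of "l - i'"] that
      show "lowerdiff phi l (\<lambda>x. U i' (V (l - i') x))" by simp
    qed
  qed
  have "lowerdiff phi l (\<lambda>x. \<Sum>i'\<le>l. U i' (V (l - i') x) - (if i' = i \<and> l = i + j then P (Q x) else 0))"
    by (rule low_sum) (use trm in auto)
  then have "lowerdiff phi l (\<lambda>x. (\<Sum>i'\<le>l. U i' (V (l - i') x)) - (if l = i + j then P (Q x) else 0))"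
    by (rule low_cong) (auto simp: sum_subtractf fun_eq_iff)
  then have "sym phi l (\<lambda>x. \<Sum>i'\<le>l. U i' (V (l - i') x)) = sym phi l (if l = i + j then (\<lambda>x. P (Q x)) else (\<lambda>_. 0))"
    by (intro sym_eq) (auto elim: low_cong)
  then show "gr_mult phi (gr_hom phi i P) (gr_hom phi j Q) l = gr_hom phi (i + j) (\<lambda>x. P (Q x)) l"
    unfolding gr_mult_def gr_hom_alt U_def V_def by simp
qed

lemma sym_scal_rep: "diffop phi l H \<Longrightarrow> sym phi l (\<lambda>x. b * rep (sym phi l H) x) = sym phi l (\<lambda>x. b * H x)"
  apply (rule sym_eq)
  using low_scal[of phi l "\<lambda>x. rep (sym phi l H) x - H x" b] rep_sym[of phi l H]
  by (auto simp: algebra_simps)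

lemma gr_scal_hom: "diffop phi n P \<Longrightarrow> gr_scal phi b (gr_hom phi n P) = gr_hom phi n (\<lambda>x. b * P x)"
  unfolding gr_scal_def
  apply (rule ext)
  subgoal for l
    using sym_scal_rep[OF diffop_H[of phi n P l], of b]
    by (simp only: gr_hom_alt) (cases "l = n"; simp)
  done

lemma gr_nsmul_hom: "diffop phi n P \<Longrightarrow> gr_nsmul phi c (gr_hom phi n P) = gr_hom phi n (\<lambda>x. of_nat c * P x)"
  using gr_scal_hom[of phi n P "of_nat c"] unfolding gr_scal_def gr_nsmul_def by simp

lemma gr_scal_zero: "gr_scal phi b (gr_zero phi) = gr_zero phi"
  unfolding gr_scal_def gr_zero_def
  using sym_scal_rep[OF diffop_zero, of phi _ b] by simp

lemma gr_hom_grD: "diffop phi n P \<Longrightarrow> gr_hom phi n P \<in> grD phi"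
proof -
  assume P: "diffop phi n P"
  have "{l. gr_hom phi n P l \<noteq> gr_zero phi l} \<subseteq> {n}" unfolding gr_hom_def gr_zero_def by auto
  then have "finite {l. gr_hom phi n P l \<noteq> gr_zero phi l}" using finite_subset by blast
  moreover have "\<exists>P'. diffop phi l P' \<and> gr_hom phi n P l = sym phi l P'" for l
    using diffop_H[OF P, of l] gr_hom_alt by blast
  ultimately show ?thesis unfolding grD_def by blast
qed

lemma gr_zero_grD: "gr_zero phi \<in> grD phi"
  unfolding grD_def gr_zero_def by (auto intro: diffop_zero)


lemma HS_D0: "HS phi m D \<Longrightarrow> D 0 x = x" unfolding HS_def by simp
lemma HS_klin: "HS phi m D \<Longrightarrow> klin phi (D i)"
  unfolding HS_def by (metis klin_zero not_le)
lemma HS_big: "HS phi m D \<Longrightarrow> \<not> enat i \<le> m \<Longrightarrow> D i = (\<lambda>_. 0)"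
  unfolding HS_def by (simp add: not_le)
lemma HS_leib: "HS phi m D \<Longrightarrow> enat i \<le> m \<Longrightarrow> D i (x * y) = (\<Sum>r\<le>i. D r x * D (i - r) y)"
  unfolding HS_def by simp

lemma HS_KF: "HS phi m D \<Longrightarrow> enat (Suc i) \<le> m \<Longrightarrow>
   D (Suc i) (a * x) = a * D (Suc i) x + (\<Sum>r\<le>i. D (Suc r) a * D (i - r) x)"
  by (simp add: HS_leib sum.atMost_Suc_shift HS_D0 del: sum.atMost_Suc)

lemma HS_diffop: "HS phi m D \<Longrightarrow> diffop phi i (D i)"
proof (induction i rule: less_induct)
  case (less i)
  show ?case
  proof (cases i)
    case 0 then show ?thesis using HS_D0[OF less.prems] diffop_id[of phi]
      by (metis diffop_cong ext)
  next
    case (Suc n)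
    show ?thesis
    proof (cases "enat i \<le> m")
      case False then show ?thesis using HS_big[OF less.prems False] diffop_zero by metis
    next
      case True
      have "diffop phi n (\<lambda>x. \<Sum>r\<le>n. D (Suc r) a * D (n - r) x)" for a
        apply (rule diffop_sum)
        apply (rule diffop_scal)
        subgoal for r
          apply (rule diffop_mono[of "n - r"])
          using less.IH less.prems Suc by auto
        done
      then show ?thesis unfolding Suc
        using HS_klin[OF less.prems] HS_KF[OF less.prems] True Suc by simp
    qed
  qed
qed

lemma HS_wd: "HS phi m D \<Longrightarrow> HS phi m D' \<Longrightarrow> D 1 = D' 1 \<Longrightarrow> lowerdiff phi i (\<lambda>x. D i x - D' i x)"
proof (induction i rule: less_induct)
  case (less i)
  note H = less.prems(1) and H' = less.prems(2) and E1 = less.prems(3)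
  show ?case
  proof (cases "enat i \<le> m")
    case False then show ?thesis using HS_big[OF H False] HS_big[OF H' False] low_zero by simp
  next
    case True
    show ?thesis
    proof (cases i)
      case 0 then show ?thesis using HS_D0[OF H] HS_D0[OF H'] low_zero by simp
    next
      case (Suc n)
      show ?thesis
      proof (cases n)
        case 0 then show ?thesis using Suc E1 klin_zero by simp
      next
        case (Suc k)
        have IHn: "diffop phi k (\<lambda>x. D n x - D' n x)" using less.IH[of n] H H' E1 Suc \<open>i = Suc n\<close> by simp
        have A: "diffop phi k (\<lambda>x. D 1 a * (D n x - D' n x) +
              (\<Sum>r\<le>k. D (Suc (Suc r)) a * D (k - r) x - D' (Suc (Suc r)) a * D' (k - r) x))" for a
          apply (rule diffop_add)
           apply (rule diffop_scal[OF IHn])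
          apply (rule diffop_sum)
          apply (rule diffop_diff)
           apply (rule diffop_scal, rule diffop_mono[OF _ HS_diffop[OF H]], simp)
          apply (rule diffop_scal, rule diffop_mono[OF _ HS_diffop[OF H']], simp)
          done
        have eq: "D (Suc n) (a * x) - D' (Suc n) (a * x) - a * (D (Suc n) x - D' (Suc n) x) =
           D 1 a * (D n x - D' n x) +
              (\<Sum>r\<le>k. D (Suc (Suc r)) a * D (k - r) x - D' (Suc (Suc r)) a * D' (k - r) x)" for a x
          using HS_KF[OF H, of n a x] HS_KF[OF H', of n a x] True \<open>i = Suc n\<close> Suc E1
          by (simp add: sum.atMost_Suc_shift sum_subtractf algebra_simps del: sum.atMost_Suc)
        have "klin phi (\<lambda>x. D (Suc n) x - D' (Suc n) x)" using HS_klin[OF H] HS_klin[OF H'] klin_diff by blast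
        then show ?thesis using A eq \<open>i = Suc n\<close> Suc by simp
      qed
    qed
  qed
qed

lemma HS_G: "HS phi m D \<Longrightarrow> enat (Suc k) \<le> m \<Longrightarrow>
   lowerdiff phi k (\<lambda>y. D (Suc k) (a * y) - a * D (Suc k) y - D 1 a * D k y)"
proof (cases k)
  case 0
  assume H: "HS phi m D" and "enat (Suc k) \<le> m"
  then show ?thesis using HS_KF[OF H, of 0] 0 HS_D0[OF H] by simp
next
  case (Suc k')
  assume H: "HS phi m D" and le: "enat (Suc k) \<le> m"
  have A: "diffop phi k' (\<lambda>y. \<Sum>r\<le>k'. D (Suc (Suc r)) a * D (k' - r) y)"
    apply (rule diffop_sum, rule diffop_scal, rule diffop_mono[OF _ HS_diffop[OF H]]) by simp
  have "D (Suc k) (a * y) - a * D (Suc k) y - D 1 a * D k y = (\<Sum>r\<le>k'. D (Suc (Suc r)) a * D (k' - r) y)" for y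
    using HS_KF[OF H le, of a y] Suc by (simp add: sum.atMost_Suc_shift del: sum.atMost_Suc)
  then show ?thesis using A Suc by simp
qed


lemma HS_binom:
  fixes phi :: "'k::comm_ring_1 \<Rightarrow> 'a::comm_ring_1"
  shows "HS phi m D \<Longrightarrow> enat (i + j) \<le> m \<Longrightarrow>
  lowerdiff phi (i + j) (\<lambda>x. D i (D j x) - of_nat ((i + j) choose i) * D (i + j) x)"
proof (induction "i + j" arbitrary: i j)
  case 0 then show ?case using HS_D0[OF 0(2)] low_zero by simp
next
  case (Suc N)
  note H = Suc.prems(1) and le = Suc.prems(2)
  show ?case
  proof (cases "i = 0 \<or> j = 0")
    case True then show ?thesis using HS_D0[OF H] low_zero by auto
  next
    case False
    then obtain i' j' where ii: "i = Suc i'" and jj: "j = Suc j'" by (metis not0_implies_Suc)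
    have NN: "N = Suc (i' + j')" using Suc.hyps(2) ii jj by simp
    have le1: "enat (i' + j) \<le> m" using le ii by (metis add_Suc enat_ord_simps(1) le_SucI order.trans order_refl)
    have le2: "enat (i + j') \<le> m" using le jj by (metis add_Suc_right enat_ord_simps(1) le_SucI order.trans order_refl)
    have IH1: "diffop phi (i' + j') (\<lambda>x. D i' (D j x) - of_nat (Suc (i' + j') choose i') * D (Suc (i' + j')) x)"
      using Suc.hyps(1)[of i' j, OF _ H le1] Suc.hyps(2) ii jj by simp
    have IH2: "diffop phi (i' + j') (\<lambda>x. D i (D j' x) - of_nat (Suc (i' + j') choose i) * D (Suc (i' + j')) x)"
      using Suc.hyps(1)[of i j', OF _ H le2] Suc.hyps(2) ii jj by simp
    have lei: "enat (Suc i') \<le> m" using le ii by (metis enat_ord_simps(1) le_add1 order.trans)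
    have lej: "enat (Suc j') \<le> m" using le jj by (metis enat_ord_simps(1) le_add2 order.trans)
    have leN: "enat (Suc (Suc (i' + j'))) \<le> m" using le ii jj by simp
    have dj: "diffop phi j (D j)" and di: "diffop phi i (D i)" and dj': "diffop phi j' (D j')"
      using HS_diffop[OF H] by auto
    have ki: "klin phi (D i)" using HS_klin[OF H] .
    show ?thesis
    proof -
      have "diffop phi (Suc (i' + j')) (\<lambda>x. D i (D j x) - of_nat ((i + j) choose i) * D (i + j) x)"
      proof (subst diffop.simps(2), intro conjI allI)
        show "klin phi (\<lambda>x. D i (D j x) - of_nat ((i + j) choose i) * D (i + j) x)"
          by (rule klin_diff[OF klin_comp[OF HS_klin[OF H] HS_klin[OF H]] klin_scal[OF HS_klin[OF H]]])
        fix a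
        define b where "b = D 1 a"
        have B1: "diffop phi (i' + j') (\<lambda>x. D i (a * D j x) - a * D i (D j x) - b * D i' (D j x))"
          using low_comp1[OF HS_G[OF H lei, of a] dj] ii jj b_def by simp
        have B2a: "lowerdiff phi (i + j') (\<lambda>x. D i (b * D j' x) - b * D i (D j' x))"
          using low_comp1[OF diffop_comm_low[OF di, of b] dj'] by simp
        have B2b: "lowerdiff phi (i + j') (\<lambda>x. D i (D j (a * x) - a * D j x - b * D j' x))"
          using low_comp2[OF di HS_G[OF H lej, of a]] jj b_def by simp
        have B2: "diffop phi (i' + j') (\<lambda>x. D i (b * D j' x) - b * D i (D j' x) + D i (D j (a * x) - a * D j x - b * D j' x))"
          using low_add[OF B2a B2b] ii by simp
        have B3: "diffop phi (i' + j') (\<lambda>x. D (Suc (Suc (i' + j'))) (a * x) - a * D (Suc (Suc (i' + j'))) x - b * D (Suc (i' + j')) x)"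
          using HS_G[OF H leN, of a] b_def by simp
        define c1 where "c1 = (of_nat (Suc (i' + j') choose i') :: 'a)"
        define c2 where "c2 = (of_nat (Suc (i' + j') choose i) :: 'a)"
        have cc: "(of_nat ((i + j) choose i) :: 'a) = c1 + c2"
          unfolding c1_def c2_def ii jj by simp
        have all: "diffop phi (i' + j') (\<lambda>x.
           (D i (a * D j x) - a * D i (D j x) - b * D i' (D j x)) +
           (D i (b * D j' x) - b * D i (D j' x) + D i (D j (a * x) - a * D j x - b * D j' x)) -
           (c1 + c2) * (D (Suc (Suc (i' + j'))) (a * x) - a * D (Suc (Suc (i' + j'))) x - b * D (Suc (i' + j')) x) +
           b * ((D i' (D j x) - c1 * D (Suc (i' + j')) x) + (D i (D j' x) - c2 * D (Suc (i' + j')) x)))"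
          apply (rule diffop_add)
           apply (rule diffop_diff)
            apply (rule diffop_add[OF B1 B2])
           apply (rule diffop_scal[OF B3])
          apply (rule diffop_scal)
          apply (rule diffop_add)
          using IH1 IH2 c1_def c2_def by auto
        show "diffop phi (i' + j') (\<lambda>x. D i (D j (a * x)) - of_nat ((i + j) choose i) * D (i + j) (a * x) -
            a * (D i (D j x) - of_nat ((i + j) choose i) * D (i + j) x))"
          using all
          apply (rule diffop_cong)
          apply (rule ext)
          apply (simp only: cc klin_minus[OF ki])
          using ii jj by (simp add: algebra_simps)
      qed
      then show ?thesis using ii jj by simp
    qed
  qed
qed


lemma quad:
  fixes F :: "nat \<Rightarrow> nat \<Rightarrow> nat \<Rightarrow> nat \<Rightarrow> 'b::comm_monoid_add"
  shows "(\<Sum>i\<le>n. \<Sum>j\<le>n-i. \<Sum>t\<le>i. F t j (i-t) (n-i-j)) = (\<Sum>r\<le>n. \<Sum>p\<le>r. \<Sum>q\<le>n-r. F p (r-p) q (n-r-q))"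
proof -
  have L: "(\<Sum>i\<le>n. \<Sum>j\<le>n-i. \<Sum>t\<le>i. F t j (i-t) (n-i-j)) =
      (\<Sum>(i,j,t)\<in>(SIGMA i:{..n}. SIGMA j:{..n-i}. {..i}). F t j (i-t) (n-i-j))"
    by (simp add: sum.Sigma)
  have R: "(\<Sum>r\<le>n. \<Sum>p\<le>r. \<Sum>q\<le>n-r. F p (r-p) q (n-r-q)) =
      (\<Sum>(r,p,q)\<in>(SIGMA r:{..n}. SIGMA p:{..r}. {..n-r}). F p (r-p) q (n-r-q))"
    by (simp add: sum.Sigma)
  have M: "(\<Sum>(i,j,t)\<in>(SIGMA i:{..n}. SIGMA j:{..n-i}. {..i}). F t j (i-t) (n-i-j)) =
      (\<Sum>(r,p,q)\<in>(SIGMA r:{..n}. SIGMA p:{..r}. {..n-r}). F p (r-p) q (n-r-q))"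
    apply (rule sum.reindex_bij_witness[where i = "\<lambda>(r,p,q). (p+q, r-p, p)" and j = "\<lambda>(i,j,t). (t+j, t, i-t)"])
    by (auto simp: add.commute)
  show ?thesis using L R M by simp
qed


definition compHS :: "enat \<Rightarrow> (nat \<Rightarrow> 'a::comm_ring_1 \<Rightarrow> 'a) \<Rightarrow> (nat \<Rightarrow> 'a \<Rightarrow> 'a) \<Rightarrow> nat \<Rightarrow> 'a \<Rightarrow> 'a" where
  "compHS m D D' = (\<lambda>n x. if enat n \<le> m then (\<Sum>i\<le>n. D i (D' (n - i) x)) else 0)"

lemma HS_comp:
  assumes H: "HS phi m D" and H': "HS phi m D'"
  shows "HS phi m (compHS m D D')"
  unfolding HS_def
proof (intro conjI allI impI)
  show "compHS m D D' 0 = id"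
    by (rule ext) (simp add: compHS_def HS_D0[OF H] HS_D0[OF H'] zero_enat_def[symmetric])
  fix i
  show "m < enat i \<Longrightarrow> compHS m D D' i = (\<lambda>_. 0)" by (auto simp: compHS_def not_le[symmetric])
  assume le: "enat i \<le> m"
  show "klin phi (compHS m D D' i)"
    unfolding compHS_def using le
    by (simp add: klin_sum klin_comp HS_klin[OF H] HS_klin[OF H'])
  fix x y
  have leq: "enat k \<le> m" if "k \<le> i" for k using le that by (meson enat_ord_simps(1) order.trans)
  have "compHS m D D' i (x * y) = (\<Sum>t\<le>i. D t (D' (i - t) (x * y)))"
    using le by (simp add: compHS_def)
  also have "\<dots> = (\<Sum>t\<le>i. \<Sum>j\<le>i-t. \<Sum>s\<le>t. D s (D' j x) * D (t - s) (D' (i - t - j) y))"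
    apply (rule sum.cong[OF refl])
    subgoal for t
    proof -
      assume "t \<in> {..i}"
      then have t: "t \<le> i" by simp
      have "D t (D' (i - t) (x * y)) = D t (\<Sum>j\<le>i-t. D' j x * D' (i - t - j) y)"
        using HS_leib[OF H' leq[of "i - t"]] t by simp
      also have "\<dots> = (\<Sum>j\<le>i-t. D t (D' j x * D' (i - t - j) y))"
        by (rule klin_sumP[OF HS_klin[OF H]])
      also have "\<dots> = (\<Sum>j\<le>i-t. \<Sum>s\<le>t. D s (D' j x) * D (t - s) (D' (i - t - j) y))"
        by (rule sum.cong[OF refl]) (rule HS_leib[OF H leq[OF t]])
      finally show ?thesis .
    qed
    done
  also have "\<dots> = (\<Sum>r\<le>i. \<Sum>p\<le>r. \<Sum>q\<le>i-r. D p (D' (r - p) x) * D q (D' (i - r - q) y))"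
    using quad[of "\<lambda>p s q v. D p (D' s x) * D q (D' v y)" i] by simp
  also have "\<dots> = (\<Sum>r\<le>i. compHS m D D' r x * compHS m D D' (i - r) y)"
    apply (rule sum.cong[OF refl])
    subgoal for r
      using leq[of r] leq[of "i - r"] by (simp add: compHS_def sum_product)
    done
  finally show "compHS m D D' i (x * y) = (\<Sum>r\<le>i. compHS m D D' r x * compHS m D D' (i - r) y)" .
qed

lemma compHS_1: "1 \<le> m \<Longrightarrow> HS phi m D \<Longrightarrow> HS phi m D' \<Longrightarrow> compHS m D D' 1 = (\<lambda>x. D 1 x + D' 1 x)"
proof -
  assume "1 \<le> m" "HS phi m D" "HS phi m D'"
  moreover have e: "enat (Suc 0) \<le> m" using \<open>1 \<le> m\<close> by (simp add: one_enat_def)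
  ultimately show ?thesis by (intro ext) (simp add: compHS_def e HS_D0 add.commute)
qed

definition scalHS :: "'a::comm_ring_1 \<Rightarrow> (nat \<Rightarrow> 'a \<Rightarrow> 'a) \<Rightarrow> nat \<Rightarrow> 'a \<Rightarrow> 'a" where
  "scalHS a D = (\<lambda>n x. a ^ n * D n x)"

lemma HS_scal:
  assumes H: "HS phi m D"
  shows "HS phi m (scalHS a D)"
  unfolding HS_def
proof (intro conjI allI impI)
  show "scalHS a D 0 = id" by (rule ext) (simp add: scalHS_def HS_D0[OF H])
  fix i
  show "m < enat i \<Longrightarrow> scalHS a D i = (\<lambda>_. 0)" using HS_big[OF H] by (auto simp: scalHS_def not_le)
  assume le: "enat i \<le> m"
  show "klin phi (scalHS a D i)" unfolding scalHS_def by (rule klin_scal[OF HS_klin[OF H]])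
  fix x y
  have "scalHS a D i (x * y) = (\<Sum>r\<le>i. a ^ i * (D r x * D (i - r) y))"
    by (simp add: scalHS_def HS_leib[OF H le] sum_distrib_left)
  also have "\<dots> = (\<Sum>r\<le>i. scalHS a D r x * scalHS a D (i - r) y)"
    apply (rule sum.cong[OF refl])
    subgoal for r
      using power_add[of a r "i - r"] by (simp add: scalHS_def algebra_simps)
    done
  finally show "scalHS a D i (x * y) = (\<Sum>r\<le>i. scalHS a D r x * scalHS a D (i - r) y)" .
qed

definition zeroHS :: "nat \<Rightarrow> 'a::comm_ring_1 \<Rightarrow> 'a" where
  "zeroHS = (\<lambda>i. if i = 0 then id else (\<lambda>_. 0))"

lemma HS_zero: "HS phi m zeroHS"
  unfolding HS_def
proof (intro conjI allI impI)
  show "zeroHS 0 = id" by (simp add: zeroHS_def)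
  fix i
  show "m < enat i \<Longrightarrow> zeroHS i = (\<lambda>_. 0)" by (auto simp: zeroHS_def zero_enat_def[symmetric])
  show "klin phi (zeroHS i)" by (simp add: zeroHS_def klin_zero klin_id id_def)
  fix x y
  show "zeroHS i (x * y) = (\<Sum>r\<le>i. zeroHS r x * zeroHS (i - r) y)"
  proof (cases "i = 0")
    case True then show ?thesis by (simp add: zeroHS_def)
  next
    case False
    then have "zeroHS r x * zeroHS (i - r) y = 0" if "r \<le> i" for r
      using that by (auto simp: zeroHS_def)
    then show ?thesis using False by (simp add: zeroHS_def)
  qed
qed

lemma SigmaD_wd: "HS phi m D \<Longrightarrow> HS phi m D' \<Longrightarrow> D 1 = D' 1 \<Longrightarrow> SigmaD phi m D = SigmaD phi m D'"
  unfolding SigmaD_def using gr_hom_eq[OF HS_wd] by metis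

lemma SigmaD_EXP:
  assumes H: "HS phi m D"
  shows "SigmaD phi m D \<in> EXP phi m"
  unfolding EXP_def
proof (intro CollectI conjI allI impI)
  fix i
  show "SigmaD phi m D i \<in> grD phi"
    by (simp add: SigmaD_def gr_hom_grD[OF HS_diffop[OF H]] gr_zero_grD)
  show "m < enat i \<Longrightarrow> SigmaD phi m D i = gr_zero phi" by (simp add: SigmaD_def not_le[symmetric])
next
  show "SigmaD phi m D 0 = gr_one phi"
  proof -
    have "D 0 = id" using H unfolding HS_def by simp
    then show ?thesis unfolding SigmaD_def gr_hom_def gr_one_def
    by (intro ext) (simp add: zero_enat_def[symmetric])
  qed
next
  fix i j
  assume le: "enat (i + j) \<le> m"
  have li: "enat i \<le> m" and lj: "enat j \<le> m" using le by (meson enat_ord_simps(1) le_add1 le_add2 order.trans)+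
  have "gr_mult phi (SigmaD phi m D i) (SigmaD phi m D j) = gr_hom phi (i + j) (\<lambda>x. D i (D j x))"
    using li lj by (simp add: SigmaD_def gr_mult_hom HS_diffop[OF H])
  also have "\<dots> = gr_hom phi (i + j) (\<lambda>x. of_nat ((i + j) choose i) * D (i + j) x)"
    by (rule gr_hom_eq[OF HS_binom[OF H le]])
  also have "\<dots> = gr_nsmul phi ((i + j) choose i) (SigmaD phi m D (i + j))"
    using le by (simp add: SigmaD_def gr_nsmul_hom HS_diffop[OF H])
  finally show "gr_nsmul phi ((i + j) choose i) (SigmaD phi m D (i + j)) = gr_mult phi (SigmaD phi m D i) (SigmaD phi m D j)"
    by simp
qed

lemma SigmaD_scal: "HS phi m D \<Longrightarrow> SigmaD phi m (scalHS a D) = EXP_scal phi a (SigmaD phi m D)"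
  unfolding SigmaD_def EXP_scal_def scalHS_def
  by (auto simp: gr_scal_hom HS_diffop gr_scal_zero)

lemma SigmaD_comp:
  assumes H: "HS phi m D" and H': "HS phi m D'"
  shows "SigmaD phi m (compHS m D D') = EXP_add phi m (SigmaD phi m D) (SigmaD phi m D')"
proof
  fix n
  show "SigmaD phi m (compHS m D D') n = EXP_add phi m (SigmaD phi m D) (SigmaD phi m D') n"
  proof (cases "enat n \<le> m")
    case False then show ?thesis by (simp add: SigmaD_def EXP_add_def)
  next
    case le: True
    have leq: "enat k \<le> m" if "k \<le> n" for k using le that by (meson enat_ord_simps(1) order.trans)
    define P where "P = (\<lambda>i x. D i (D' (n - i) x))"
    have dP: "diffop phi n (P i)" if "i \<le> n" for i
      using diffop_comp[OF HS_diffop[OF H, of i] HS_diffop[OF H', of "n - i"]] that by (simp add: P_def)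
    have gm: "gr_mult phi (SigmaD phi m D i) (SigmaD phi m D' (n - i)) = gr_hom phi n (P i)" if "i \<le> n" for i
      using gr_mult_hom[OF HS_diffop[OF H, of i] HS_diffop[OF H', of "n - i"]] that leq[of i] leq[of "n - i"]
      by (simp add: SigmaD_def P_def)
    show ?thesis
    proof
      fix l
      have "lowerdiff phi l (\<lambda>x. \<Sum>i\<le>n. rep (gr_hom phi n (P i) l) x - (if l = n then P i x else 0))"
        by (rule low_sum) (use rep_gr_hom[OF dP] in auto)
      then have "lowerdiff phi l (\<lambda>x. (\<Sum>i\<le>n. rep (gr_hom phi n (P i) l) x) - (if l = n then compHS m D D' n x else 0))"
        by (rule low_cong) (auto simp: sum_subtractf compHS_def le P_def fun_eq_iff)
      then have "sym phi l (\<lambda>x. \<Sum>i\<le>n. rep (gr_hom phi n (P i) l) x) = sym phi l (if l = n then compHS m D D' n else (\<lambda>_. 0))"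
        by (intro sym_eq) (auto elim: low_cong)
      then show "SigmaD phi m (compHS m D D') n l = EXP_add phi m (SigmaD phi m D) (SigmaD phi m D') n l"
        using le gm by (simp add: SigmaD_def EXP_add_def gr_hom_alt)
    qed
  qed
qed

theorem mainTheorem9:
  fixes phi :: "'k::comm_ring_1 \<Rightarrow> 'a::comm_ring_1" and m :: enat
  assumes "ring_hom_map phi" and "1 \<le> m"
  shows "\<exists>\<chi> :: ('a \<Rightarrow> 'a) \<Rightarrow> (nat \<Rightarrow> 'a grd).
           (\<forall>\<delta>\<in>Ider phi m. \<forall>D. HS phi m D \<and> D 1 = \<delta> \<longrightarrow> \<chi> \<delta> = SigmaD phi m D)
         \<and> (\<forall>\<delta>\<in>Ider phi m. \<chi> \<delta> \<in> EXP phi m)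
         \<and> (\<lambda>_. 0) \<in> Ider phi m
         \<and> (\<forall>\<delta>\<in>Ider phi m. \<forall>\<delta>'\<in>Ider phi m.
              (\<lambda>x. \<delta> x + \<delta>' x) \<in> Ider phi m
              \<and> \<chi> (\<lambda>x. \<delta> x + \<delta>' x) = EXP_add phi m (\<chi> \<delta>) (\<chi> \<delta>'))
         \<and> (\<forall>a. \<forall>\<delta>\<in>Ider phi m.
              (\<lambda>x. a * \<delta> x) \<in> Ider phi m
              \<and> \<chi> (\<lambda>x. a * \<delta> x) = EXP_scal phi a (\<chi> \<delta>))"
proof -
  define \<chi> where "\<chi> = (\<lambda>\<delta>. SigmaD phi m (SOME D. HS phi m D \<and> D 1 = \<delta>))"
  have chi: "\<chi> (D 1) = SigmaD phi m D" if H: "HS phi m D" for D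
  proof -
    have "\<exists>E. HS phi m E \<and> E 1 = D 1" using H by blast
    then have "HS phi m (SOME E. HS phi m E \<and> E 1 = D 1) \<and> (SOME E. HS phi m E \<and> E 1 = D 1) 1 = D 1"
      by (rule someI_ex)
    then show ?thesis unfolding \<chi>_def using SigmaD_wd H by blast
  qed
  have I: "\<delta> \<in> Ider phi m \<longleftrightarrow> (\<exists>D. HS phi m D \<and> D 1 = \<delta>)" for \<delta> by (simp add: Ider_def)
  show ?thesis
  proof (rule exI[of _ \<chi>], intro conjI ballI allI impI)
    fix \<delta> D assume "HS phi m D \<and> D 1 = \<delta>"
    then show "\<chi> \<delta> = SigmaD phi m D" using chi by blast
  next
    fix \<delta> assume "\<delta> \<in> Ider phi m"
    then obtain D where "HS phi m D" "D 1 = \<delta>" using I by blast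
    then show "\<chi> \<delta> \<in> EXP phi m" using chi SigmaD_EXP by metis
  next
    show "(\<lambda>_. 0) \<in> Ider phi m" unfolding I using HS_zero[of phi m]
      by (intro exI[of _ zeroHS]) (simp add: zeroHS_def)
  next
    fix \<delta> \<delta>' assume "\<delta> \<in> Ider phi m" "\<delta>' \<in> Ider phi m"
    then obtain D D' where H: "HS phi m D" "D 1 = \<delta>" and H': "HS phi m D'" "D' 1 = \<delta>'" using I by metis
    have C: "HS phi m (compHS m D D')" using HS_comp H H' by blast
    have C1: "compHS m D D' 1 = (\<lambda>x. \<delta> x + \<delta>' x)" using compHS_1[OF assms(2) H(1) H'(1)] H H' by simp
    show "(\<lambda>x. \<delta> x + \<delta>' x) \<in> Ider phi m" using C C1 I by blast
    show "\<chi> (\<lambda>x. \<delta> x + \<delta>' x) = EXP_add phi m (\<chi> \<delta>) (\<chi> \<delta>')"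
      using chi[OF C] C1 chi[OF H(1)] chi[OF H'(1)] SigmaD_comp[OF H(1) H'(1)] H H' by simp
  next
    fix a \<delta> assume "\<delta> \<in> Ider phi m"
    then obtain D where H: "HS phi m D" "D 1 = \<delta>" using I by metis
    have S: "HS phi m (scalHS a D)" using HS_scal H by blast
    have S1: "scalHS a D 1 = (\<lambda>x. a * \<delta> x)" using H by (simp add: scalHS_def)
    show "(\<lambda>x. a * \<delta> x) \<in> Ider phi m" using S S1 I by blast
    show "\<chi> (\<lambda>x. a * \<delta> x) = EXP_scal phi a (\<chi> \<delta>)"
      using chi[OF S] S1 chi[OF H(1)] SigmaD_scal[OF H(1)] H by simp
  qed
qed

end
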